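(* Let $T:X\to X$ be a continuous map on a Hausdorff topological space $X$. The following are equivalent: (i) $T$ is quasi-rigid; (ii) $T$ is $\mathcal{F}(A)$-recurrent for some infinite set $A\subset\mathbb{N}_0$; (iii) $T$ is $\mathcal{F}$-recurrent for some Furstenberg family $\mathcal{F}$ which is a filter and has a countable base (i.e. there are $A_k\in\mathcal{F}$, $k\in\mathbb{N}$, such that every member of $\mathcal{F}$ contains some $A_k$). If moreover $X$ is second-countable, these are also equivalent to: (iv) $T$ is $\mathcal{F}$-recurrent for some Furstenberg family $\mathcal{F}$ with the finite intersection property.
   Context: A Furstenberg family is a collection $\mathcal{F}$ of subsets of $\mathbb{N}_0$ such that every $A\in\mathcal{F}$ is infinite, $B\in\mathcal{F}$ whenever $A\in\mathcal{F}$ and $A\subset B$, and $A\cap[n,\infty)\in\mathcal{F}$ for all $A\in\mathcal{F}$, $n\in\mathbb{N}$. $\mathcal{F}$ is a filter if it is hereditarily upward and $A\cap B\in\mathcal{F}$ for all $A,B\in\mathcal{F}$; it has the finite intersection property if every finite subcollection has non-empty intersection. For infinite $A\subset\mathbb{N}_0$, $\mathcal{F}(A)=\{B\subset\mathbb{N}_0:A\setminus B \text{ is finite}\}$. For $x\in X$ and $U\subset X$, $N(x,U)=\{n\in\mathbb{N}_0:T^nx\in U\}$. A point $x$ is $\mathcal{F}$-recurrent if $N(x,U)\in\mathcal{F}$ for every neighbourhood $U$ of $x$; $T$ is $\mathcal{F}$-recurrent if the set of $\mathcal{F}$-recurrent points is dense. $T$ is quasi-rigid if there exist a strictly increasing sequence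 $(n_k)$ of positive integers and a dense $Y\subset X$ with $T^{n_k}x\to x$ for every $x\in Y$. *)

theory Defs
  imports "HOL-Analysis.Analysis"
begin

definition furstenberg_family :: "nat set set \<Rightarrow> bool" where
  "furstenberg_family F \<longleftrightarrow>
     (\<forall>A\<in>F. infinite A) \<and>
     (\<forall>A B. A \<in> F \<and> A \<subseteq> B \<longrightarrow> B \<in> F) \<and>
     (\<forall>A\<in>F. \<forall>n. A \<inter> {n..} \<in> F)"

definition is_filter_family :: "nat set set \<Rightarrow> bool" where
  "is_filter_family F \<longleftrightarrow>
     (\<forall>A B. A \<in> F \<and> A \<subseteq> B \<longrightarrow> B \<in> F) \<and>
     (\<forall>A\<in>F. \<forall>B\<in>F. A \<inter> B \<in> F)"

definition has_fip :: "nat set set \<Rightarrow> bool" where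
  "has_fip F \<longleftrightarrow> (\<forall>G. G \<subseteq> F \<and> finite G \<longrightarrow> \<Inter>G \<noteq> {})"

definition has_countable_base :: "nat set set \<Rightarrow> bool" where
  "has_countable_base F \<longleftrightarrow>
     (\<exists>Ak :: nat \<Rightarrow> nat set. (\<forall>k. Ak k \<in> F) \<and> (\<forall>B\<in>F. \<exists>k. Ak k \<subseteq> B))"

definition cofinite_family :: "nat set \<Rightarrow> nat set set" where
  "cofinite_family A = {B. finite (A - B)}"

definition return_set :: "('a \<Rightarrow> 'a) \<Rightarrow> 'a \<Rightarrow> 'a set \<Rightarrow> nat set" where
  "return_set T x U = {n. (T ^^ n) x \<in> U}"

definition F_recurrent_point :: "'a topology \<Rightarrow> ('a \<Rightarrow> 'a) \<Rightarrow> nat set set \<Rightarrow> 'a \<Rightarrow> bool" where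
  "F_recurrent_point X T F x \<longleftrightarrow>
     (\<forall>U. U \<subseteq> topspace X \<and> (\<exists>V. openin X V \<and> x \<in> V \<and> V \<subseteq> U) \<longrightarrow> return_set T x U \<in> F)"

definition F_recurrent :: "'a topology \<Rightarrow> ('a \<Rightarrow> 'a) \<Rightarrow> nat set set \<Rightarrow> bool" where
  "F_recurrent X T F \<longleftrightarrow>
     X closure_of {x \<in> topspace X. F_recurrent_point X T F x} = topspace X"

definition quasi_rigid :: "'a topology \<Rightarrow> ('a \<Rightarrow> 'a) \<Rightarrow> bool" where
  "quasi_rigid X T \<longleftrightarrow>
     (\<exists>(n :: nat \<Rightarrow> nat) Y. strict_mono n \<and> (\<forall>k. 0 < n k) \<and>
        Y \<subseteq> topspace X \<and> X closure_of Y = topspace X \<and>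
        (\<forall>x\<in>Y. limitin X (\<lambda>k. (T ^^ n k) x) x sequentially))"

end

theory Submission
  imports Defs
begin


lemma Frec_mono:
  assumes "F \<subseteq> G" "F_recurrent X T F"
  shows "F_recurrent X T G"
proof -
  have "{x \<in> topspace X. F_recurrent_point X T F x} \<subseteq> {x \<in> topspace X. F_recurrent_point X T G x}"
    using assms(1) unfolding F_recurrent_point_def by blast
  then have "X closure_of {x \<in> topspace X. F_recurrent_point X T F x} \<subseteq> X closure_of {x \<in> topspace X. F_recurrent_point X T G x}"
    by (rule closure_of_mono)
  then show ?thesis using assms(2) closure_of_subset_topspace unfolding F_recurrent_def by (metis subset_antisym)
qed

lemma dense_sub:
  assumes "Y \<subseteq> R" "X closure_of Y = topspace X" "R \<subseteq> topspace X"
  shows "X closure_of R = topspace X"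
  by (metis assms closure_of_mono closure_of_subset_topspace subset_antisym)

lemma ev_nat: "finite S \<Longrightarrow> \<exists>K. \<forall>k\<ge>K. k \<notin> S" for S :: "nat set"
  by (meson finite_nat_bounded lessThan_iff linorder_not_le subsetD)

lemma QR_to_cof:
  assumes "quasi_rigid X T"
  shows "\<exists>A. infinite A \<and> F_recurrent X T (cofinite_family A)"
proof -
  obtain n Y where n: "strict_mono n" "\<forall>k. 0 < n k" and Y: "Y \<subseteq> topspace X" "X closure_of Y = topspace X"
    and L: "\<forall>x\<in>Y. limitin X (\<lambda>k. (T ^^ n k) x) x sequentially"
    using assms unfolding quasi_rigid_def by blast
  have inj: "inj n" using n(1) by (rule strict_mono_imp_inj_on)
  have inf: "infinite (range n)"
  proof
    assume "finite (range n)"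
    then have "finite (UNIV :: nat set)" using finite_imageD[OF _ inj] by blast
    then show False by simp
  qed
  have rec: "\<forall>x\<in>Y. F_recurrent_point X T (cofinite_family (range n)) x"
  proof
    fix x assume x: "x \<in> Y"
    show "F_recurrent_point X T (cofinite_family (range n)) x"
      unfolding F_recurrent_point_def
    proof (intro allI impI)
      fix U assume "U \<subseteq> topspace X \<and> (\<exists>V. openin X V \<and> x \<in> V \<and> V \<subseteq> U)"
      then obtain V where V: "openin X V" "x \<in> V" "V \<subseteq> U" by (elim conjE exE)
      have lim: "limitin X (\<lambda>k. (T ^^ n k) x) x sequentially" using L x by (rule bspec)
      have "eventually (\<lambda>k. (T ^^ n k) x \<in> V) sequentially"
        using lim V(1,2) unfolding limitin_def by (elim conjE allE impE) (rule conjI)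
      then obtain K where K: "\<forall>k\<ge>K. (T ^^ n k) x \<in> V" unfolding eventually_sequentially by (elim exE)
      have "range n - return_set T x U \<subseteq> n ` {..<K}"
      proof
        fix m assume m: "m \<in> range n - return_set T x U"
        then obtain k where k: "m = n k" by blast
        have "(T ^^ n k) x \<notin> U" using m k unfolding return_set_def by simp
        then have "\<not> K \<le> k" using K V(3) by blast
        then show "m \<in> n ` {..<K}" using k by simp
      qed
      then have "finite (range n - return_set T x U)"
        by (rule finite_subset) simp
      then show "return_set T x U \<in> cofinite_family (range n)"
        unfolding cofinite_family_def by simp
    qed
  qed
  then have "Y \<subseteq> {x \<in> topspace X. F_recurrent_point X T (cofinite_family (range n)) x}"
    using Y(1) by blast
  then have "F_recurrent X T (cofinite_family (range n))"
    unfolding F_recurrent_def by (rule dense_sub[OF _ Y(2)]) blast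
  then show ?thesis using inf by blast
qed

lemma seq_to_QR:
  fixes n :: "nat \<Rightarrow> nat"
  assumes n: "strict_mono n" "\<forall>k. 0 < n k"
    and ev: "\<forall>C\<in>F. \<exists>K. \<forall>k\<ge>K. n k \<in> C"
    and R: "F_recurrent X T F"
  shows "quasi_rigid X T"
proof -
  let ?Y = "{x \<in> topspace X. F_recurrent_point X T F x}"
  have L: "\<forall>x\<in>?Y. limitin X (\<lambda>k. (T ^^ n k) x) x sequentially"
  proof
    fix x assume x: "x \<in> ?Y"
    show "limitin X (\<lambda>k. (T ^^ n k) x) x sequentially"
      unfolding limitin_def
    proof (intro conjI allI impI)
      show "x \<in> topspace X" using x by blast
      fix U assume U: "openin X U \<and> x \<in> U"
      have P: "F_recurrent_point X T F x" using x by blast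
      have a: "U \<subseteq> topspace X" using U openin_subset by blast
      have b: "\<exists>V. openin X V \<and> x \<in> V \<and> V \<subseteq> U"
        by (rule exI[of _ U]) (use U in simp)
      from P have imp: "U \<subseteq> topspace X \<and> (\<exists>V. openin X V \<and> x \<in> V \<and> V \<subseteq> U) \<longrightarrow> return_set T x U \<in> F"
        unfolding F_recurrent_point_def by (rule spec)
      have "return_set T x U \<in> F" using mp[OF imp conjI[OF a b]] .
      from bspec[OF ev this] obtain K where K: "\<forall>k\<ge>K. n k \<in> return_set T x U" by (elim exE)
      show "eventually (\<lambda>k. (T ^^ n k) x \<in> U) sequentially"
        unfolding eventually_sequentially
        by (rule exI[of _ K]) (use K in \<open>simp add: return_set_def\<close>)
    qed
  qed
  have "?Y \<subseteq> topspace X" by blast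
  then have all: "strict_mono n \<and> (\<forall>k. 0 < n k) \<and> ?Y \<subseteq> topspace X \<and> X closure_of ?Y = topspace X
     \<and> (\<forall>x\<in>?Y. limitin X (\<lambda>k. (T ^^ n k) x) x sequentially)"
    using n L R[unfolded F_recurrent_def] by (intro conjI)
  show ?thesis unfolding quasi_rigid_def
    by (rule exI[of _ n], rule exI[of _ ?Y], rule all)
qed

lemma cof_to_QR:
  assumes "infinite A" "F_recurrent X T (cofinite_family A)"
  shows "quasi_rigid X T"
proof -
  define S where "S = A - {0}"
  have inf: "infinite S" unfolding S_def using assms(1) by simp
  define n where "n = enumerate S"
  have sm: "strict_mono n" unfolding n_def by (rule strict_mono_enumerate[OF inf])
  have inS: "n k \<in> S" for k unfolding n_def by (rule enumerate_in_set[OF inf])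
  have pos: "\<forall>k. 0 < n k"
  proof
    fix k have "n k \<in> A - {0}" using inS[of k] unfolding S_def .
    then have "n k \<noteq> 0" by simp
    then show "0 < n k" by simp
  qed
  have inj: "inj n" using sm by (rule strict_mono_imp_inj_on)
  have ev: "\<forall>C\<in>cofinite_family A. \<exists>K. \<forall>k\<ge>K. n k \<in> C"
  proof
    fix C assume "C \<in> cofinite_family A"
    then have "finite (A - C)" unfolding cofinite_family_def by simp
    then have "finite (n -` (A - C))" using inj by (rule finite_vimageI)
    then obtain K where K: "\<forall>k\<ge>K. k \<notin> n -` (A - C)" using ev_nat by blast
    have "\<forall>k\<ge>K. n k \<in> C"
    proof (intro allI impI)
      fix k assume "K \<le> k"
      then have "k \<notin> n -` (A - C)" using K by blast
      moreover have "n k \<in> A" using inS[of k] unfolding S_def by blast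
      ultimately show "n k \<in> C" by blast
    qed
    then show "\<exists>K. \<forall>k\<ge>K. n k \<in> C" by blast
  qed
  show ?thesis by (rule seq_to_QR[OF sm pos ev assms(2)])
qed



lemma cof_ff:
  assumes "infinite A"
  shows "furstenberg_family (cofinite_family A)"
  unfolding furstenberg_family_def
proof (intro conjI)
  show "\<forall>B\<in>cofinite_family A. infinite B"
  proof
    fix B assume "B \<in> cofinite_family A"
    then have "finite (A - B)" unfolding cofinite_family_def by simp
    then show "infinite B" using assms finite_Diff2[of B A] by blast
  qed
  show "\<forall>B C. B \<in> cofinite_family A \<and> B \<subseteq> C \<longrightarrow> C \<in> cofinite_family A"
  proof (intro allI impI)
    fix B C assume a: "B \<in> cofinite_family A \<and> B \<subseteq> C"
    then have "A - C \<subseteq> A - B" by blast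
    then show "C \<in> cofinite_family A" using a unfolding cofinite_family_def
      using finite_subset by blast
  qed
  show "\<forall>B\<in>cofinite_family A. \<forall>n. B \<inter> {n..} \<in> cofinite_family A"
  proof (intro ballI allI)
    fix B n assume a: "B \<in> cofinite_family A"
    have "A - (B \<inter> {n..}) \<subseteq> (A - B) \<union> {..<n}" by auto
    moreover have "finite ((A - B) \<union> {..<n})" using a unfolding cofinite_family_def by simp
    ultimately show "B \<inter> {n..} \<in> cofinite_family A" unfolding cofinite_family_def
      using finite_subset by blast
  qed
qed



lemma cof_filt:
  shows "is_filter_family (cofinite_family A)"
  unfolding is_filter_family_def
proof (intro conjI)
  show "\<forall>B C. B \<in> cofinite_family A \<and> B \<subseteq> C \<longrightarrow> C \<in> cofinite_family A"
  proof (intro allI impI)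
    fix B C assume a: "B \<in> cofinite_family A \<and> B \<subseteq> C"
    then have "A - C \<subseteq> A - B" by blast
    then show "C \<in> cofinite_family A" using a unfolding cofinite_family_def
      using finite_subset by blast
  qed
  show "\<forall>B\<in>cofinite_family A. \<forall>C\<in>cofinite_family A. B \<inter> C \<in> cofinite_family A"
  proof (intro ballI)
    fix B C assume "B \<in> cofinite_family A" "C \<in> cofinite_family A"
    then show "B \<inter> C \<in> cofinite_family A" unfolding cofinite_family_def by (simp add: Diff_Int)
  qed
qed

lemma cof_base:
  shows "has_countable_base (cofinite_family A)"
  unfolding has_countable_base_def
proof (rule exI[of _ "\<lambda>k. A \<inter> {k..}"], intro conjI allI ballI)
  fix k
  have "A - A \<inter> {k..} \<subseteq> {..<k}" by auto
  then have "finite (A - A \<inter> {k..})" using finite_subset by blast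
  then show "A \<inter> {k..} \<in> cofinite_family A" unfolding cofinite_family_def by simp
next
  fix B assume "B \<in> cofinite_family A"
  then obtain k where "A - B \<subseteq> {..<k}" unfolding cofinite_family_def using finite_nat_bounded by auto
  have "A \<inter> {k..} \<subseteq> B"
  proof
    fix x assume x: "x \<in> A \<inter> {k..}"
    show "x \<in> B"
    proof (rule ccontr)
      assume "x \<notin> B"
      then have "x \<in> {..<k}" using x \<open>A - B \<subseteq> {..<k}\<close> by blast
      then show False using x by simp
    qed
  qed
  then show "\<exists>k. A \<inter> {k..} \<subseteq> B" by blast
qed

lemma cof_fip:
  assumes "infinite A"
  shows "has_fip (cofinite_family A)"
  unfolding has_fip_def
proof (intro allI impI)
  fix G assume G: "G \<subseteq> cofinite_family A \<and> finite G"
  have "\<forall>C\<in>G. finite (A - C)" using G unfolding cofinite_family_def by blast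
  then have "finite (\<Union>C\<in>G. A - C)" using G by blast
  then have "infinite (A - (\<Union>C\<in>G. A - C))" using assms by simp
  then obtain a where "a \<in> A - (\<Union>C\<in>G. A - C)" by (metis finite.emptyI ex_in_conv)
  then have "a \<in> \<Inter>G" by blast
  then show "\<Inter>G \<noteq> {}" by blast
qed



lemma filter_to_QR:
  assumes FF: "furstenberg_family F" and FI: "is_filter_family F" and CB: "has_countable_base F"
    and R: "F_recurrent X T F"
  shows "quasi_rigid X T"
proof -
  obtain Ak :: "nat \<Rightarrow> nat set" where Ak: "\<forall>k. Ak k \<in> F" "\<forall>B\<in>F. \<exists>k. Ak k \<subseteq> B"
    using CB unfolding has_countable_base_def by blast
  have inter: "\<And>P Q. P \<in> F \<Longrightarrow> Q \<in> F \<Longrightarrow> P \<inter> Q \<in> F"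
    using FI unfolding is_filter_family_def by blast
  define B where "B = rec_nat (Ak 0) (\<lambda>k b. b \<inter> Ak (Suc k))"
  have B0: "B 0 = Ak 0" and BS: "B (Suc k) = B k \<inter> Ak (Suc k)" for k unfolding B_def by simp_all
  have BF: "B k \<in> F" for k
  proof (induction k)
    case 0 show ?case using Ak(1) B0 by simp
  next
    case (Suc k) show ?case unfolding BS using inter Suc Ak(1) by blast
  qed
  have Binf: "infinite (B k)" for k using BF FF unfolding furstenberg_family_def by blast
  have BA: "B k \<subseteq> Ak k" for k
  proof (cases k)
    case 0 then show ?thesis using B0 by simp
  next
    case (Suc j) then show ?thesis using BS[of j] by blast
  qed
  have Bdec: "decseq B" unfolding decseq_Suc_iff using BS by blast
  define pick where "pick k lo = (SOME m. m \<in> B k \<and> lo \<le> m)" for k lo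
  have pick: "pick k lo \<in> B k \<and> lo \<le> pick k lo" for k lo
  proof -
    have "\<exists>m. m \<in> B k \<and> lo \<le> m" using Binf[of k] infinite_nat_iff_unbounded_le by blast
    then show ?thesis unfolding pick_def by (rule someI_ex)
  qed
  define n where "n = rec_nat (pick 0 1) (\<lambda>k p. pick (Suc k) (Suc p))"
  have n0: "n 0 = pick 0 1" and nS: "n (Suc k) = pick (Suc k) (Suc (n k))" for k
    unfolding n_def by simp_all
  have nB: "n k \<in> B k" for k
  proof (cases k)
    case 0 then show ?thesis using n0 pick[of 0 1] by simp
  next
    case (Suc j) then show ?thesis using nS[of j] pick[of "Suc j" "Suc (n j)"] by simp
  qed
  have sm: "strict_mono n"
  proof (rule strict_monoI_Suc)
    fix k show "n k < n (Suc k)" using nS[of k] pick[of "Suc k" "Suc (n k)"] by simp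
  qed
  have pos: "\<forall>k. 0 < n k"
  proof
    fix k show "0 < n k"
    proof (cases k)
      case 0 then show ?thesis using n0 pick[of 0 1] by simp
    next
      case (Suc j) then show ?thesis using nS[of j] pick[of "Suc j" "Suc (n j)"] by simp
    qed
  qed
  show ?thesis
  proof (rule seq_to_QR[OF sm pos _ R], intro ballI)
    fix C assume "C \<in> F"
    from bspec[OF Ak(2) this] obtain j where j: "Ak j \<subseteq> C" by (elim exE)
    have "\<forall>k\<ge>j. n k \<in> C"
    proof (intro allI impI)
      fix k assume "j \<le> k"
      then have "B k \<subseteq> B j" using Bdec by (simp add: decseqD)
      then show "n k \<in> C" using nB[of k] BA[of j] j by blast
    qed
    then show "\<exists>K. \<forall>k\<ge>K. n k \<in> C" by blast
  qed
qed



lemma fip_to_QR: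
  assumes SC: "second_countable X" and FF: "furstenberg_family F" and FIP: "has_fip F"
    and RR: "F_recurrent X T F"
  shows "quasi_rigid X T"
proof -
  define R where "R = {x \<in> topspace X. F_recurrent_point X T F x}"
  have Rtop: "R \<subseteq> topspace X" unfolding R_def by blast
  have Rcl: "X closure_of R = topspace X" using RR unfolding F_recurrent_def R_def .
  obtain \<B> where B: "countable \<B>" "\<forall>V \<in> \<B>. openin X V"
    "\<forall>U x. openin X U \<and> x \<in> U \<longrightarrow> (\<exists>V \<in> \<B>. x \<in> V \<and> V \<subseteq> U)"
    using SC unfolding second_countable_def by blast
  define \<B>' where "\<B>' = insert (topspace X) \<B>"
  define b where "b = from_nat_into \<B>'"
  have rb: "range b = \<B>'" unfolding b_def \<B>'_def using B(1) by simp
  have bopen: "openin X (b i)" for i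
  proof -
    have "b i \<in> \<B>'" using rb by blast
    then show ?thesis unfolding \<B>'_def using B(2) by auto
  qed
  have btop: "b i \<subseteq> topspace X" for i using bopen[of i] by (rule openin_subset)
  have bbase: "\<exists>i. x \<in> b i \<and> b i \<subseteq> U" if "openin X U" "x \<in> U" for U x
  proof -
    from B(3) that obtain V where V: "V \<in> \<B>" "x \<in> V" "V \<subseteq> U" by blast
    have "V \<in> range b" using V(1) rb unfolding \<B>'_def by blast
    then obtain i where "V = b i" by blast
    then show ?thesis using V by blast
  qed
  define good where "good j \<longleftrightarrow> b j \<inter> R \<noteq> {}" for j
  define y where "y j = (SOME z. z \<in> b j \<inter> R)" for j
  have y: "y j \<in> b j \<and> y j \<in> R" if "good j" for j
  proof -
    have "\<exists>z. z \<in> b j \<inter> R" using that unfolding good_def by blast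
    then have "y j \<in> b j \<inter> R" unfolding y_def by (rule someI_ex)
    then show ?thesis by blast
  qed
  define Y where "Y = y ` {j. good j}"
  have YR: "Y \<subseteq> R" unfolding Y_def using y by blast
  have RY: "R \<subseteq> X closure_of Y"
  proof
    fix x assume x: "x \<in> R"
    show "x \<in> X closure_of Y"
      unfolding in_closure_of
    proof (intro conjI allI impI)
      show "x \<in> topspace X" using x Rtop by blast
      fix V assume V: "x \<in> V \<and> openin X V"
      then obtain i where i: "x \<in> b i" "b i \<subseteq> V" using bbase by blast
      have gi: "good i" unfolding good_def using i(1) x by blast
      have "y i \<in> Y" unfolding Y_def using gi by blast
      moreover have "y i \<in> V" using y[OF gi] i(2) by blast
      ultimately show "\<exists>z. z \<in> Y \<and> z \<in> V" by blast
    qed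
  qed
  have Ycl: "X closure_of Y = topspace X"
  proof (rule subset_antisym)
    show "X closure_of Y \<subseteq> topspace X" by (rule closure_of_subset_topspace)
    have "X closure_of R \<subseteq> X closure_of (X closure_of Y)" using RY by (rule closure_of_mono)
    then show "topspace X \<subseteq> X closure_of Y" using Rcl by simp
  qed
  have Ytop: "Y \<subseteq> topspace X" using YR Rtop by blast
  have retF: "return_set T (y j) (b i) \<in> F" if "good j" "y j \<in> b i" for i j
  proof -
    have P: "F_recurrent_point X T F (y j)" using y[OF that(1)] unfolding R_def by blast
    have nb: "\<exists>V. openin X V \<and> y j \<in> V \<and> V \<subseteq> b i"
      by (rule exI[of _ "b i"]) (use bopen that(2) in simp)
    from P have imp: "b i \<subseteq> topspace X \<and> (\<exists>V. openin X V \<and> y j \<in> V \<and> V \<subseteq> b i) \<longrightarrow> return_set T (y j) (b i) \<in> F"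
      unfolding F_recurrent_point_def by (rule spec)
    show ?thesis using mp[OF imp conjI[OF btop nb]] .
  qed
  have Fcut: "C \<inter> {lo..} \<in> F" if "C \<in> F" for C lo
    using FF that unfolding furstenberg_family_def by blast
  define G where "G k lo = (\<lambda>(j,i). return_set T (y j) (b i) \<inter> {lo..}) `
      {(j,i). j \<le> k \<and> i \<le> k \<and> good j \<and> y j \<in> b i}" for k lo :: nat
  have Gfin: "finite (G k lo)" for k lo
  proof -
    have "{(j,i). j \<le> k \<and> i \<le> k \<and> good j \<and> y j \<in> b i} \<subseteq> {..k} \<times> {..k}" by auto
    then have "finite {(j,i). j \<le> k \<and> i \<le> k \<and> good j \<and> y j \<in> b i}"
      by (rule finite_subset) simp
    then show ?thesis unfolding G_def by (rule finite_imageI)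
  qed
  have GF: "G k lo \<subseteq> F" for k lo
  proof
    fix C assume "C \<in> G k lo"
    then obtain j i where ji: "good j" "y j \<in> b i" "C = return_set T (y j) (b i) \<inter> {lo..}"
      unfolding G_def by auto
    show "C \<in> F" using Fcut[OF retF[OF ji(1,2)]] ji(3) by simp
  qed
  have Gex: "\<exists>m. m \<in> \<Inter>(G k lo) \<and> lo \<le> m" for k lo
  proof (cases "G k lo = {}")
    case True then show ?thesis by (intro exI[of _ lo]) simp
  next
    case False
    have "\<Inter>(G k lo) \<noteq> {}" using FIP GF[of k lo] Gfin[of k lo] unfolding has_fip_def by blast
    then obtain m where m: "m \<in> \<Inter>(G k lo)" by blast
    obtain C where C: "C \<in> G k lo" using False by blast
    then have "C \<subseteq> {lo..}" unfolding G_def by auto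
    then have "lo \<le> m" using m C by blast
    then show ?thesis using m by blast
  qed
  define pick where "pick k lo = (SOME m. m \<in> \<Inter>(G k lo) \<and> lo \<le> m)" for k lo
  have pick: "pick k lo \<in> \<Inter>(G k lo) \<and> lo \<le> pick k lo" for k lo
    unfolding pick_def using Gex[of k lo] by (rule someI_ex)
  define n where "n = rec_nat (pick 0 1) (\<lambda>k p. pick (Suc k) (Suc p))"
  have n0: "n 0 = pick 0 1" and nS: "n (Suc k) = pick (Suc k) (Suc (n k))" for k
    unfolding n_def by simp_all
  have nG: "\<exists>lo. n k = pick k lo" for k
    by (cases k) (use n0 nS in blast)+
  have nret: "n k \<in> return_set T (y j) (b i)" if "j \<le> k" "i \<le> k" "good j" "y j \<in> b i" for k j i
  proof -
    obtain lo where lo: "n k = pick k lo" using nG by blast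
    have "return_set T (y j) (b i) \<inter> {lo..} \<in> G k lo"
      unfolding G_def using that by blast
    then have "pick k lo \<in> return_set T (y j) (b i) \<inter> {lo..}" using pick[of k lo] by blast
    then show ?thesis using lo by simp
  qed
  have sm: "strict_mono n"
  proof (rule strict_monoI_Suc)
    fix k show "n k < n (Suc k)" using nS[of k] pick[of "Suc k" "Suc (n k)"] by simp
  qed
  have pos: "\<forall>k. 0 < n k"
  proof
    fix k show "0 < n k"
    proof (cases k)
      case 0 then show ?thesis using n0 pick[of 0 1] by simp
    next
      case (Suc j) then show ?thesis using nS[of j] pick[of "Suc j" "Suc (n j)"] by simp
    qed
  qed
  have L: "\<forall>x\<in>Y. limitin X (\<lambda>k. (T ^^ n k) x) x sequentially"
  proof
    fix x assume "x \<in> Y"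
    then obtain j where j: "good j" "x = y j" unfolding Y_def by blast
    show "limitin X (\<lambda>k. (T ^^ n k) x) x sequentially"
      unfolding limitin_def
    proof (intro conjI allI impI)
      show "x \<in> topspace X" using \<open>x \<in> Y\<close> Ytop by blast
      fix U assume U: "openin X U \<and> x \<in> U"
      then obtain i where i: "x \<in> b i" "b i \<subseteq> U" using bbase by blast
      have "\<forall>k\<ge>max i j. (T ^^ n k) x \<in> U"
      proof (intro allI impI)
        fix k assume "max i j \<le> k"
        then have "n k \<in> return_set T (y j) (b i)" using nret[of j k i] j i by simp
        then show "(T ^^ n k) x \<in> U" using i(2) j(2) unfolding return_set_def by blast
      qed
      then show "eventually (\<lambda>k. (T ^^ n k) x \<in> U) sequentially"
        unfolding eventually_sequentially by (rule exI)
    qed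
  qed
  have all: "strict_mono n \<and> (\<forall>k. 0 < n k) \<and> Y \<subseteq> topspace X \<and> X closure_of Y = topspace X
     \<and> (\<forall>x\<in>Y. limitin X (\<lambda>k. (T ^^ n k) x) x sequentially)"
    using sm pos Ytop Ycl L by (intro conjI)
  show ?thesis unfolding quasi_rigid_def
    by (rule exI[of _ n], rule exI[of _ Y], rule all)
qed


theorem mainTheorem9:
  fixes X :: "'a topology" and T :: "'a \<Rightarrow> 'a"
  assumes "Hausdorff_space X" and "continuous_map X X T"
  shows "(quasi_rigid X T \<longleftrightarrow> (\<exists>A. infinite A \<and> F_recurrent X T (cofinite_family A)))
       \<and> (quasi_rigid X T \<longleftrightarrow> (\<exists>F. furstenberg_family F \<and> is_filter_family F \<and>
                                  has_countable_base F \<and> F_recurrent X T F))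
       \<and> (second_countable X \<longrightarrow>
            (quasi_rigid X T \<longleftrightarrow> (\<exists>F. furstenberg_family F \<and> has_fip F \<and> F_recurrent X T F)))"
proof (intro conjI impI iffI)
  assume "quasi_rigid X T"
  then show "\<exists>A. infinite A \<and> F_recurrent X T (cofinite_family A)" by (rule QR_to_cof)
next
  assume "\<exists>A. infinite A \<and> F_recurrent X T (cofinite_family A)"
  then obtain A where "infinite A" "F_recurrent X T (cofinite_family A)" by blast
  then show "quasi_rigid X T" by (rule cof_to_QR)
next
  assume "quasi_rigid X T"
  then obtain A where A: "infinite A" "F_recurrent X T (cofinite_family A)" by (metis QR_to_cof)
  have "furstenberg_family (cofinite_family A) \<and> is_filter_family (cofinite_family A) \<and>
        has_countable_base (cofinite_family A) \<and> F_recurrent X T (cofinite_family A)"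
    using cof_ff[OF A(1)] cof_filt cof_base A(2) by (intro conjI)
  then show "\<exists>F. furstenberg_family F \<and> is_filter_family F \<and> has_countable_base F \<and> F_recurrent X T F"
    by (rule exI)
next
  assume "\<exists>F. furstenberg_family F \<and> is_filter_family F \<and> has_countable_base F \<and> F_recurrent X T F"
  then obtain F where "furstenberg_family F" "is_filter_family F" "has_countable_base F" "F_recurrent X T F"
    by blast
  then show "quasi_rigid X T" by (rule filter_to_QR)
next
  assume "quasi_rigid X T"
  then obtain A where A: "infinite A" "F_recurrent X T (cofinite_family A)" by (metis QR_to_cof)
  have "furstenberg_family (cofinite_family A) \<and> has_fip (cofinite_family A) \<and> F_recurrent X T (cofinite_family A)"
    using cof_ff[OF A(1)] cof_fip[OF A(1)] A(2) by (intro conjI)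
  then show "\<exists>F. furstenberg_family F \<and> has_fip F \<and> F_recurrent X T F" by (rule exI)
next
  assume "second_countable X" "\<exists>F. furstenberg_family F \<and> has_fip F \<and> F_recurrent X T F"
  then obtain F where "furstenberg_family F" "has_fip F" "F_recurrent X T F" by blast
  then show "quasi_rigid X T" using fip_to_QR \<open>second_countable X\<close> by blast
qed

end
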